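(* Let $A\in\mathbb{C}^{m\times n}$ have rank $r$, $B\in\mathbb{C}^{m\times n}$ have rank $s$, and $E=B-A$. Then $$\|B^{\dagger}-A^{\dagger}\|_{F}^{2}\geq\max\big\{\beta'_{1}+\|B^{\dagger}EA^{\dagger}\|_{F}^{2},\ \beta'_{2}+\|A^{\dagger}EB^{\dagger}\|_{F}^{2}\big\},$$ where $$\beta'_{1}:=\frac{\|E\|_{F}^{2}-\|EB^{\dagger}B\|_{F}^{2}}{\|A\|_{2}^{4}}+\frac{\|E\|_{F}^{2}-\|AA^{\dagger}E\|_{F}^{2}}{\|B\|_{2}^{4}},\qquad \beta'_{2}:=\frac{\|E\|_{F}^{2}-\|BB^{\dagger}E\|_{F}^{2}}{\|A\|_{2}^{4}}+\frac{\|E\|_{F}^{2}-\|EA^{\dagger}A\|_{F}^{2}}{\|B\|_{2}^{4}}.$$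
   Context: $M^{\dagger}$ denotes the Moore–Penrose inverse of $M$, $\|\cdot\|_{2}$ the spectral norm and $\|\cdot\|_{F}$ the Frobenius norm. *)

theory Defs
  imports "HOL-Analysis.Analysis"
begin

text \<open>Complex m x n matrices are represented as complex^'n^'m (rows indexed by 'm).\<close>

definition conj_transpose :: "complex^'n^'m \<Rightarrow> complex^'m^'n" where
  "conj_transpose A = (\<chi> i j. cnj (A $ j $ i))"

definition moore_penrose :: "complex^'n^'m \<Rightarrow> complex^'m^'n" where
  "moore_penrose A = (THE X. A ** X ** A = A \<and> X ** A ** X = X \<and>
       conj_transpose (A ** X) = A ** X \<and> conj_transpose (X ** A) = X ** A)"

definition frob_norm :: "complex^'n^'m \<Rightarrow> real" where
  "frob_norm A = sqrt (\<Sum>i\<in>UNIV. \<Sum>j\<in>UNIV. (cmod (A $ i $ j))\<^sup>2)"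

definition spec_norm :: "complex^'n^'m \<Rightarrow> real" where
  "spec_norm A = onorm (\<lambda>x. A *v x)"

end

theory Submission
  imports Defs
begin


abbreviation cT where "cT \<equiv> conj_transpose"

lemma cT_cT[simp]: "cT (cT A) = A"
  by (simp add: conj_transpose_def vec_eq_iff)

lemma cT_mult: "cT (A ** B) = cT B ** cT A"
  by (simp add: conj_transpose_def matrix_matrix_mult_def vec_eq_iff cnj_sum mult.commute)

lemma cT_diff: "cT (A - B) = cT A - cT B"
  by (simp add: conj_transpose_def vec_eq_iff)

lemma cT_uminus: "cT (- A) = - cT A"
  by (simp add: conj_transpose_def vec_eq_iff)

lemma cT_mat1[simp]: "cT (mat 1 :: complex^'n^'n) = mat 1"
  by (simp add: conj_transpose_def vec_eq_iff mat_def)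

lemma matrix_diff_ldistrib: "(A::'a::ring_1^'n^'m) ** (B - C) = A ** B - A ** C"
  by (simp add: matrix_matrix_mult_def vec_eq_iff sum_subtractf right_diff_distrib)

lemma matrix_diff_rdistrib: "((B::'a::ring_1^'n^'m) - C) ** A = B ** A - C ** A"
  by (simp add: matrix_matrix_mult_def vec_eq_iff sum_subtractf left_diff_distrib)

lemma matrix_uminus_left: "(- (B::'a::ring_1^'n^'m)) ** A = - (B ** A)"
  by (simp add: matrix_matrix_mult_def vec_eq_iff sum_negf)

lemma matrix_uminus_right: "(B::'a::ring_1^'n^'m) ** (- A) = - (B ** A)"
  by (simp add: matrix_matrix_mult_def vec_eq_iff sum_negf)

lemma inner_complex_eq: "inner (a::complex) b = Re (a * cnj b)"
  by (simp add: inner_complex_def)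

lemma inner_adjoint: "inner ((M::complex^'n^'m) *v x) y = inner x (cT M *v y)"
proof -
  have "inner (M *v x) y = (\<Sum>i\<in>UNIV. \<Sum>j\<in>UNIV. Re (M$i$j * x$j * cnj (y$i)))"
    by (simp add: inner_vec_def matrix_vector_mult_def inner_complex_eq sum_distrib_right Re_sum)
  also have "\<dots> = (\<Sum>j\<in>UNIV. \<Sum>i\<in>UNIV. Re (M$i$j * x$j * cnj (y$i)))"
    by (rule sum.swap)
  also have "\<dots> = inner x (cT M *v y)"
    by (simp add: inner_vec_def matrix_vector_mult_def inner_complex_eq conj_transpose_def
        cnj_sum sum_distrib_left Re_sum mult.commute mult.left_commute)
  finally show ?thesis .
qed

definition fsq :: "complex^'n^'m \<Rightarrow> real" where
  "fsq X = (\<Sum>i\<in>UNIV. \<Sum>j\<in>UNIV. (cmod (X $ i $ j))\<^sup>2)"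

lemma fsq_nonneg: "0 \<le> fsq X"
  by (simp add: fsq_def sum_nonneg)

lemma frob_sq: "(frob_norm X)\<^sup>2 = fsq X"
  by (simp add: frob_norm_def fsq_def sum_nonneg)

lemma fsq_cT: "fsq (cT X) = fsq X"
  by (simp add: fsq_def conj_transpose_def) (rule sum.swap)

lemma fsq_uminus: "fsq (- X) = fsq X"
  by (simp add: fsq_def)

lemma fsq_columns: "fsq (X::complex^'k^'n) = (\<Sum>j\<in>UNIV. (norm (column j X))\<^sup>2)"
  by (simp add: fsq_def norm_vec_def L2_set_def column_def sum_nonneg) (rule sum.swap)

lemma column_mult: "column j (M ** X) = M *v column j X"
  by (simp add: column_def matrix_matrix_mult_def matrix_vector_mult_def vec_eq_iff)


lemma vec_pyth:
  assumes h: "cT Q = Q" and idem: "Q ** Q = Q"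
  shows "(norm (x::complex^'n))\<^sup>2 = (norm (Q *v x))\<^sup>2 + (norm ((mat 1 - Q) *v x))\<^sup>2"
proof -
  have e: "(mat 1 - Q) *v x = x - Q *v x"
    by (simp add: matrix_vector_mult_diff_rdistrib)
  have "inner (Q *v x) (x - Q *v x) = inner x (Q *v x - Q *v (Q *v x))"
    by (simp add: inner_adjoint h matrix_vector_mult_diff_distrib)
  also have "\<dots> = 0" by (simp add: matrix_vector_mul_assoc idem)
  finally have "orthogonal (Q *v x) (x - Q *v x)" by (simp add: orthogonal_def)
  from norm_add_Pythagorean[OF this] show ?thesis by (simp add: e)
qed

lemma pyth_left:
  assumes h: "cT Q = Q" and idem: "Q ** Q = Q"
  shows "fsq (X::complex^'k^'n) = fsq (Q ** X) + fsq ((mat 1 - Q) ** X)"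
proof -
  have "fsq X = (\<Sum>j\<in>UNIV. (norm (Q *v column j X))\<^sup>2 + (norm ((mat 1 - Q) *v column j X))\<^sup>2)"
    unfolding fsq_columns by (rule sum.cong[OF refl], rule vec_pyth[OF h idem])
  then show ?thesis by (simp add: fsq_columns column_mult sum.distrib)
qed

lemma pyth_right:
  assumes h: "cT Q = Q" and idem: "Q ** Q = Q"
  shows "fsq (X::complex^'k^'n) = fsq (X ** Q) + fsq (X ** (mat 1 - Q))"
proof -
  have "fsq X = fsq (cT X)" by (simp add: fsq_cT)
  also have "\<dots> = fsq (Q ** cT X) + fsq ((mat 1 - Q) ** cT X)" by (rule pyth_left[OF h idem])
  also have "\<dots> = fsq (X ** Q) + fsq (X ** (mat 1 - Q))"
  proof -
    have 1: "fsq (X ** Q) = fsq (Q ** cT X)"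
      using fsq_cT[of "X ** Q"] by (simp only: cT_mult h)
    have 2: "fsq (X ** (mat 1 - Q)) = fsq ((mat 1 - Q) ** cT X)"
      using fsq_cT[of "X ** (mat 1 - Q)"] by (simp only: cT_mult h cT_diff cT_mat1)
    show ?thesis by (simp only: 1 2)
  qed
  finally show ?thesis .
qed

lemma fsq_bound:
  assumes b: "\<And>x. norm ((M::complex^'n^'m) *v x) \<le> c * norm x" and c: "0 \<le> c"
  shows "fsq (M ** (X::complex^'k^'n)) \<le> c\<^sup>2 * fsq X"
proof -
  have "fsq (M ** X) = (\<Sum>j\<in>UNIV. (norm (M *v column j X))\<^sup>2)"
    by (simp add: fsq_columns column_mult)
  also have "\<dots> \<le> (\<Sum>j\<in>UNIV. c\<^sup>2 * (norm (column j X))\<^sup>2)"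
  proof (rule sum_mono)
    fix j
    have "(norm (M *v column j X))\<^sup>2 \<le> (c * norm (column j X))\<^sup>2"
      by (rule power_mono[OF b]) simp
    then show "(norm (M *v column j X))\<^sup>2 \<le> c\<^sup>2 * (norm (column j X))\<^sup>2"
      by (simp add: power_mult_distrib)
  qed
  also have "\<dots> = c\<^sup>2 * fsq X" by (simp add: fsq_columns sum_distrib_left)
  finally show ?thesis .
qed

lemma spec_nonneg: "0 \<le> spec_norm (A::complex^'n^'m)"
  unfolding spec_norm_def by (rule onorm_pos_le) simp

lemma spec_bound: "norm ((A::complex^'n^'m) *v x) \<le> spec_norm A * norm x"
  unfolding spec_norm_def by (rule onorm) simp

lemma spec_bound_cT: "norm (cT (A::complex^'n^'m) *v y) \<le> spec_norm A * norm y"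
proof -
  let ?z = "cT A *v y"
  have "(norm ?z)\<^sup>2 = inner ?z ?z" by (simp add: power2_norm_eq_inner)
  also have "\<dots> = inner (A *v ?z) y" by (simp add: inner_adjoint)
  also have "\<dots> \<le> norm (A *v ?z) * norm y" by (rule norm_cauchy_schwarz)
  also have "\<dots> \<le> spec_norm A * norm ?z * norm y"
    by (rule mult_right_mono[OF spec_bound]) simp
  finally have *: "(norm ?z)\<^sup>2 \<le> spec_norm A * norm ?z * norm y" .
  show ?thesis
  proof (cases "norm ?z = 0")
    case True then show ?thesis using spec_nonneg[of A] by simp
  next
    case False
    then have "0 < norm ?z" by simp
    have "norm ?z * norm ?z \<le> (spec_norm A * norm y) * norm ?z"
      using * by (simp add: power2_eq_square algebra_simps)
    with \<open>0 < norm ?z\<close> show ?thesis by (meson mult_le_cancel_right_pos)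
  qed
qed



lemma range_normal:
  fixes A :: "complex^'n^'m"
  shows "\<exists>x. (cT A ** A) *v x = cT A *v w"
proof -
  let ?M = "cT A ** A"
  let ?S = "range (\<lambda>x. ?M *v x)"
  have sub: "subspace ?S"
    by (rule linear_subspace_image[OF _ subspace_UNIV]) simp
  obtain y z where y: "y \<in> span ?S" and z: "\<And>u. u \<in> span ?S \<Longrightarrow> orthogonal z u"
    and v: "cT A *v w = y + z"
    by (rule orthogonal_subspace_decomp_exists[of ?S "cT A *v w"]) blast
  have spanS: "span ?S = ?S" by (rule span_eq_iff[THEN iffD2, OF sub])
  have "orthogonal z (?M *v z)" using z spanS by auto
  then have "inner z (cT A *v (A *v z)) = 0"
    by (simp add: orthogonal_def matrix_vector_mul_assoc)
  then have "inner (A *v z) (A *v z) = 0"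
    by (simp add: inner_adjoint)
  then have Az: "A *v z = 0" by simp
  have "inner z (cT A *v w) = 0"
    by (metis inner_adjoint Az inner_zero_left)
  moreover have "inner z y = 0" using z y orthogonal_def by blast
  ultimately have "inner z z = 0" using v by (simp add: inner_add_right)
  then have "z = 0" by simp
  then have "cT A *v w \<in> ?S" using v y spanS by simp
  then show ?thesis by auto
qed

lemma normal_solve:
  fixes A :: "complex^'n^'m"
  shows "\<exists>Y::complex^'m^'n. cT A ** A ** Y = cT A"
proof -
  have "\<forall>j. \<exists>x. (cT A ** A) *v x = cT A *v column j (mat 1 :: complex^'m^'m)"
    using range_normal by blast
  then obtain x where x: "\<And>j. (cT A ** A) *v x j = cT A *v column j (mat 1 :: complex^'m^'m)"
    by metis
  define Y :: "complex^'m^'n" where "Y = (\<chi> i j. x j $ i)"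
  have "column j (cT A ** A ** Y) = column j (cT A)" for j
  proof -
    have "column j Y = x j" by (simp add: Y_def column_def vec_eq_iff)
    then have "column j (cT A ** A ** Y) = cT A *v column j (mat 1 :: complex^'m^'m)"
      by (simp add: column_mult x)
    also have "\<dots> = column j (cT A ** mat 1)" by (simp only: column_mult)
    finally show ?thesis by simp
  qed
  then have "cT A ** A ** Y = cT A"
    by (simp add: column_def vec_eq_iff)
  then show ?thesis by blast
qed


lemma proj_lemma:
  fixes A :: "complex^'n^'m" and Y :: "complex^'m^'n"
  assumes Y: "cT A ** A ** Y = cT A"
  shows "cT (A ** Y) = A ** Y" "A ** Y ** A = A"
proof -
  let ?P = "A ** Y"
  have "cT ?P ** ?P = cT Y ** (cT A ** A ** Y)" by (simp add: cT_mult matrix_mul_assoc)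
  also have "\<dots> = cT ?P" by (simp only: Y cT_mult)
  finally have 1: "cT ?P ** ?P = cT ?P" .
  have "?P = cT (cT ?P ** ?P)" by (simp only: 1 cT_cT)
  also have "\<dots> = cT ?P ** ?P" by (simp only: cT_mult cT_cT)
  also have "\<dots> = cT ?P" by (rule 1)
  finally have h: "cT ?P = ?P" by simp
  show "cT ?P = ?P" by (rule h)
  have "cT A ** ?P = cT A ** A ** Y" by (simp add: matrix_mul_assoc)
  also have "\<dots> = cT A" by (rule Y)
  finally have "cT (cT A ** ?P) = A" by simp
  then have "cT ?P ** A = A" by (simp only: cT_mult cT_cT)
  then show "?P ** A = A" by (simp only: h)
qed

definition is_mp :: "complex^'n^'m \<Rightarrow> complex^'m^'n \<Rightarrow> bool" where
  "is_mp A X \<longleftrightarrow> A ** X ** A = A \<and> X ** A ** X = X \<and>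
       conj_transpose (A ** X) = A ** X \<and> conj_transpose (X ** A) = X ** A"

lemma mp_exists: "\<exists>X. is_mp (A::complex^'n^'m) X"
proof -
  obtain Y where Y: "cT A ** A ** Y = cT A" using normal_solve by blast
  obtain Z where Z0: "cT (cT A) ** cT A ** Z = cT (cT A)" using normal_solve by blast
  define P where "P = A ** Y"
  define Q where "Q = cT A ** Z"
  have hP: "cT P = P" and PA: "P ** A = A" using proj_lemma[OF Y] by (simp_all add: P_def)
  have hQ: "cT Q = Q" and QA: "Q ** cT A = cT A" using proj_lemma[OF Z0] by (simp_all add: Q_def)
  have "A ** Q = cT (Q ** cT A)" by (simp only: cT_mult cT_cT hQ)
  also have "\<dots> = A" by (simp only: QA cT_cT)
  finally have AQ: "A ** Q = A" .
  have "P ** P = (P ** A) ** Y" unfolding P_def by (simp add: matrix_mul_assoc)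
  also have "\<dots> = A ** Y" by (simp only: PA)
  finally have PP: "P ** P = P" by (simp add: P_def)
  have cQ: "cT Q = cT Z ** A" by (simp add: Q_def cT_mult)
  have AYA: "A ** Y ** A = A" using PA by (simp only: P_def)
  have "Q ** Y ** A = cT Q ** Y ** A" by (simp only: hQ)
  also have "\<dots> = cT Z ** (A ** Y ** A)" by (simp add: cQ matrix_mul_assoc)
  also have "\<dots> = Q" by (simp only: AYA cQ[symmetric] hQ)
  finally have QYA: "Q ** Y ** A = Q" .
  define X where "X = Q ** Y ** P"
  have "A ** X = (A ** Q) ** Y ** P" by (simp add: X_def matrix_mul_assoc)
  also have "\<dots> = P ** P" by (simp only: AQ P_def)
  finally have AX: "A ** X = P" by (simp only: PP)
  have "X ** A = Q ** Y ** (P ** A)" by (simp add: X_def matrix_mul_assoc)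
  also have "\<dots> = Q" by (simp only: PA QYA)
  finally have XA: "X ** A = Q" .
  have "X ** A ** X = X ** (A ** X)" by (simp add: matrix_mul_assoc)
  also have "\<dots> = X ** P" by (simp only: AX)
  also have "\<dots> = Q ** Y ** (P ** P)" by (simp add: X_def matrix_mul_assoc)
  also have "\<dots> = X" by (simp only: PP X_def)
  finally have XAX: "X ** A ** X = X" .
  have "A ** X ** A = A" by (simp only: AX PA)
  moreover note XAX
  moreover have "cT (A ** X) = A ** X" by (simp only: AX hP)
  moreover have "cT (X ** A) = X ** A" by (simp only: XA hQ)
  ultimately show ?thesis unfolding is_mp_def by blast
qed

lemma mp_unique:
  assumes 1: "is_mp A X1" and 2: "is_mp A X2"
  shows "X1 = X2"
proof -
  have a1: "A ** X1 ** A = A" "X1 ** A ** X1 = X1" "cT (A ** X1) = A ** X1" "cT (X1 ** A) = X1 ** A"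
    using 1 by (auto simp: is_mp_def)
  have a2: "A ** X2 ** A = A" "X2 ** A ** X2 = X2" "cT (A ** X2) = A ** X2" "cT (X2 ** A) = X2 ** A"
    using 2 by (auto simp: is_mp_def)
  have "X1 = X1 ** (A ** X1)" by (simp add: matrix_mul_assoc a1)
  also have "\<dots> = X1 ** cT (A ** X1)" by (simp only: a1)
  also have "\<dots> = X1 ** cT X1 ** cT (A ** X2 ** A)" by (simp add: a2 cT_mult matrix_mul_assoc)
  also have "\<dots> = X1 ** cT (A ** X1) ** cT (A ** X2)" by (simp add: cT_mult matrix_mul_assoc)
  also have "\<dots> = X1 ** (A ** X1) ** (A ** X2)" by (simp only: a1 a2)
  also have "\<dots> = (X1 ** A ** X1) ** A ** X2" by (simp add: matrix_mul_assoc)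
  also have "\<dots> = X1 ** A ** X2" by (simp only: a1)
  finally have e1: "X1 = X1 ** A ** X2" .
  have "X2 = (X2 ** A) ** X2" by (simp add: a2)
  also have "\<dots> = cT (X2 ** A) ** X2" by (simp only: a2)
  also have "\<dots> = cT (A ** X1 ** A) ** cT X2 ** X2" by (simp add: a1 cT_mult matrix_mul_assoc)
  also have "\<dots> = cT (X1 ** A) ** cT (X2 ** A) ** X2" by (simp add: cT_mult matrix_mul_assoc)
  also have "\<dots> = (X1 ** A) ** (X2 ** A) ** X2" by (simp only: a1 a2)
  also have "\<dots> = X1 ** A ** (X2 ** A ** X2)" by (simp add: matrix_mul_assoc)
  also have "\<dots> = X1 ** A ** X2" by (simp only: a2)
  finally show ?thesis using e1 by simp
qed

lemma mp_props: "is_mp A (moore_penrose A)"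
proof -
  have "\<exists>!X. is_mp A X" using mp_exists mp_unique by blast
  then have "is_mp A (THE X. is_mp A X)" by (rule theI')
  then show ?thesis by (simp add: moore_penrose_def is_mp_def)
qed


lemma tail2: "(a::'a::semiring_1^'n^'m) ** b = d \<Longrightarrow> x ** a ** b = x ** d"
  by (simp add: matrix_mul_assoc[symmetric])

lemma tail3: "(a::'a::semiring_1^'n^'m) ** b ** c = d \<Longrightarrow> x ** a ** b ** c = x ** d"
  by (simp add: matrix_mul_assoc[symmetric])

lemma div_le_aux: "0 \<le> (y::real) \<Longrightarrow> y \<le> c * x \<Longrightarrow> 0 \<le> c \<Longrightarrow> 0 \<le> x \<Longrightarrow> y / c \<le> x"
  by (cases "c = 0") (simp_all add: divide_le_eq mult.commute)

lemma main_ineq: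
  fixes A B :: "complex^'n^'m"
  defines "E \<equiv> B - A"
  shows "fsq (moore_penrose B - moore_penrose A) \<ge>
     fsq (moore_penrose B ** E ** moore_penrose A)
     + (fsq E - fsq (E ** moore_penrose B ** B)) / (spec_norm A) ^ 4
     + (fsq E - fsq (A ** moore_penrose A ** E)) / (spec_norm B) ^ 4"
proof -
  define A' where "A' = moore_penrose A"
  define B' where "B' = moore_penrose B"
  have a: "A ** A' ** A = A" "A' ** A ** A' = A'" "cT (A ** A') = A ** A'" "cT (A' ** A) = A' ** A"
    using mp_props[of A] by (auto simp: is_mp_def A'_def)
  have b: "B ** B' ** B = B" "B' ** B ** B' = B'" "cT (B ** B') = B ** B'" "cT (B' ** B) = B' ** B"
    using mp_props[of B] by (auto simp: is_mp_def B'_def)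
  note at = tail3[OF a(1)] tail3[OF a(2)]
  note bt = tail3[OF b(1)] tail3[OF b(2)]
  define P where "P = A ** A'"
  define Q where "Q = B' ** B"
  have hP: "cT P = P" using a by (simp add: P_def)
  have hQ: "cT Q = Q" using b by (simp add: Q_def)
  have PP: "P ** P = P" unfolding P_def by (simp add: matrix_mul_assoc at a)
  have QQ: "Q ** Q = Q" unfolding Q_def by (simp add: matrix_mul_assoc bt b)
  define D where "D = B' - A'"
  define W where "W = (mat 1 :: complex^'m^'m) - P"
  define V where "V = (mat 1 :: complex^'n^'n) - Q"
  have hW: "cT W = W" by (simp add: W_def cT_diff hP)
  have hV: "cT V = V" by (simp add: V_def cT_diff hQ)
  have s1: "fsq D = fsq (Q ** D) + fsq (V ** D)"
    unfolding V_def by (rule pyth_left[OF hQ QQ])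
  have s2: "fsq (Q ** D) = fsq (Q ** D ** P) + fsq (Q ** D ** W)"
    unfolding W_def by (rule pyth_right[OF hP PP])
  have s3: "fsq (V ** D) = fsq (V ** D ** P) + fsq (V ** D ** W)"
    unfolding W_def by (rule pyth_right[OF hP PP])
  have e1: "Q ** D ** P = - (B' ** E ** A')"
    unfolding Q_def D_def P_def E_def
    by (simp add: matrix_diff_ldistrib matrix_diff_rdistrib matrix_mul_assoc a b at bt)
  have e2: "Q ** D ** W = B' ** W"
    unfolding Q_def D_def W_def P_def
    by (simp add: matrix_diff_ldistrib matrix_diff_rdistrib matrix_mul_assoc a b at bt)
  have e3: "V ** D ** P = - (V ** A')"
    unfolding V_def D_def Q_def P_def
    by (simp add: matrix_diff_ldistrib matrix_diff_rdistrib matrix_mul_assoc a b at bt)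
  have main1: "fsq D \<ge> fsq (B' ** E ** A') + fsq (B' ** W) + fsq (V ** A')"
    using s1 s2 s3 e1 e2 e3 fsq_nonneg[of "V ** D ** W"] by (simp add: fsq_uminus)
  have WE: "W ** E = W ** B"
    unfolding W_def E_def P_def
    by (simp add: matrix_diff_ldistrib matrix_diff_rdistrib matrix_mul_assoc a b at bt)
  have cB: "cT B = cT B ** B ** B'"
  proof -
    have "cT B = cT (B ** B' ** B)" by (simp only: b)
    also have "\<dots> = cT B ** cT (B ** B')" by (simp only: cT_mult matrix_mul_assoc)
    also have "\<dots> = cT B ** B ** B'" by (simp only: b matrix_mul_assoc)
    finally show ?thesis .
  qed
  have "fsq (W ** E) = fsq (cT B ** W)"
    using fsq_cT[of "W ** B"] by (simp only: WE cT_mult hW)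
  also have "\<dots> = fsq (cT B ** (B ** (B' ** W)))"
    by (subst cB) (simp add: matrix_mul_assoc)
  also have "\<dots> \<le> (spec_norm B)\<^sup>2 * fsq (B ** (B' ** W))"
    by (rule fsq_bound[OF spec_bound_cT spec_nonneg])
  also have "\<dots> \<le> (spec_norm B)\<^sup>2 * ((spec_norm B)\<^sup>2 * fsq (B' ** W))"
    by (rule mult_left_mono[OF fsq_bound[OF spec_bound spec_nonneg]]) simp
  finally have b1: "fsq (W ** E) \<le> (spec_norm B) ^ 4 * fsq (B' ** W)"
    by (simp add: mult.assoc[symmetric] power_add[symmetric])
  have EV: "E ** V = - (A ** V)"
    unfolding V_def E_def Q_def
    by (simp add: matrix_diff_ldistrib matrix_diff_rdistrib matrix_mul_assoc a b at bt)
  have AV: "A ** V = A ** (cT A ** cT (V ** A'))"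
  proof -
    have "A ** V = A ** A' ** A ** V" by (simp only: a)
    also have "\<dots> = A ** cT (A' ** A) ** V" by (simp only: a matrix_mul_assoc)
    also have "\<dots> = A ** (cT A ** cT (V ** A'))" by (simp add: cT_mult hV matrix_mul_assoc)
    finally show ?thesis .
  qed
  have "fsq (E ** V) = fsq (A ** (cT A ** cT (V ** A')))"
    by (simp only: EV fsq_uminus AV)
  also have "\<dots> \<le> (spec_norm A)\<^sup>2 * fsq (cT A ** cT (V ** A'))"
    by (rule fsq_bound[OF spec_bound spec_nonneg])
  also have "\<dots> \<le> (spec_norm A)\<^sup>2 * ((spec_norm A)\<^sup>2 * fsq (cT (V ** A')))"
    by (rule mult_left_mono[OF fsq_bound[OF spec_bound_cT spec_nonneg]]) simp
  finally have b2: "fsq (E ** V) \<le> (spec_norm A) ^ 4 * fsq (V ** A')"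
    by (simp add: mult.assoc[symmetric] power_add[symmetric] fsq_cT)
  have p1: "fsq E = fsq (P ** E) + fsq (W ** E)"
    unfolding W_def by (rule pyth_left[OF hP PP])
  have p2: "fsq E = fsq (E ** Q) + fsq (E ** V)"
    unfolding V_def by (rule pyth_right[OF hQ QQ])
  have d1: "fsq (W ** E) / (spec_norm B) ^ 4 \<le> fsq (B' ** W)"
    by (rule div_le_aux[OF fsq_nonneg b1 _ fsq_nonneg]) (simp add: spec_nonneg)
  have d2: "fsq (E ** V) / (spec_norm A) ^ 4 \<le> fsq (V ** A')"
    by (rule div_le_aux[OF fsq_nonneg b2 _ fsq_nonneg]) (simp add: spec_nonneg)
  have q: "E ** B' ** B = E ** Q" by (simp add: Q_def matrix_mul_assoc)
  have "fsq E - fsq (E ** B' ** B) = fsq (E ** V)" using p2 q by simp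
  moreover have "fsq E - fsq (A ** A' ** E) = fsq (W ** E)" using p1 by (simp add: P_def)
  ultimately show ?thesis
    using main1 d1 d2 by (simp add: A'_def B'_def D_def)
qed


theorem corollary3p7:
  fixes A B :: "complex^'n^'m"
  defines "E \<equiv> B - A"
  defines "\<beta>1 \<equiv> ((frob_norm E)\<^sup>2 - (frob_norm (E ** moore_penrose B ** B))\<^sup>2) / (spec_norm A) ^ 4
                 + ((frob_norm E)\<^sup>2 - (frob_norm (A ** moore_penrose A ** E))\<^sup>2) / (spec_norm B) ^ 4"
  defines "\<beta>2 \<equiv> ((frob_norm E)\<^sup>2 - (frob_norm (B ** moore_penrose B ** E))\<^sup>2) / (spec_norm A) ^ 4
                 + ((frob_norm E)\<^sup>2 - (frob_norm (E ** moore_penrose A ** A))\<^sup>2) / (spec_norm B) ^ 4"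
  shows "(frob_norm (moore_penrose B - moore_penrose A))\<^sup>2 \<ge>
           max (\<beta>1 + (frob_norm (moore_penrose B ** E ** moore_penrose A))\<^sup>2)
               (\<beta>2 + (frob_norm (moore_penrose A ** E ** moore_penrose B))\<^sup>2)"
proof (rule max.boundedI)
  show "\<beta>1 + (frob_norm (moore_penrose B ** E ** moore_penrose A))\<^sup>2
        \<le> (frob_norm (moore_penrose B - moore_penrose A))\<^sup>2"
    using main_ineq[of B A] unfolding \<beta>1_def E_def frob_sq by simp
  have m: "- (B - A) = A - B" by simp
  have 1: "fsq (B - A) = fsq (A - B)" by (metis m fsq_uminus)
  have 2: "fsq (moore_penrose B - moore_penrose A) = fsq (moore_penrose A - moore_penrose B)"
    by (metis minus_diff_eq fsq_uminus)
  have 3: "fsq (B ** moore_penrose B ** (B - A)) = fsq (B ** moore_penrose B ** (A - B))"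
    by (metis m matrix_uminus_right fsq_uminus)
  have 4: "fsq ((B - A) ** moore_penrose A ** A) = fsq ((A - B) ** moore_penrose A ** A)"
    by (metis m matrix_uminus_left fsq_uminus)
  have 5: "fsq (moore_penrose A ** (B - A) ** moore_penrose B) = fsq (moore_penrose A ** (A - B) ** moore_penrose B)"
    by (metis m matrix_uminus_left matrix_uminus_right fsq_uminus)
  show "\<beta>2 + (frob_norm (moore_penrose A ** E ** moore_penrose B))\<^sup>2
        \<le> (frob_norm (moore_penrose B - moore_penrose A))\<^sup>2"
    using main_ineq[of A B] unfolding \<beta>2_def E_def frob_sq 1 2 3 4 5 by simp
qed

end
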